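(* Let $\mathbf{b}=(b_n)_{n\in\mathbb{N}_0}$ be a $D$-sequence. Then $\frac{b_{n+1}}{b_n}\to\infty$ if and only if $b_j\to 0$ in $(\mathbb{Z},\tau_{\mathbf{b}})$.
   Context: $\mathbb{T}=\mathbb{R}/\mathbb{Z}$; $\mathbb{T}_m=[-\frac{1}{4m},\frac{1}{4m}]+\mathbb{Z}$. A $D$-sequence is a sequence $\mathbf{b}=(b_n)_{n\in\mathbb{N}_0}$ of natural numbers with $b_0=1$, $b_n\mid b_{n+1}$, $b_n\neq b_{n+1}$. $\tau_{\mathbf{b}}$ is the group topology on $\mathbb{Z}$ with neighborhood basis at $0$ given by $V_{\mathbf{b},m}=\{k\in\mathbb{Z}: \frac{k}{b_n}+\mathbb{Z}\in\mathbb{T}_m \text{ for all } n\in\mathbb{N}\}$, $m\in\mathbb{N}$. *)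

theory Defs
  imports "HOL-Analysis.Analysis"
begin

definition D_sequence :: "(nat \<Rightarrow> nat) \<Rightarrow> bool" where
  "D_sequence b \<longleftrightarrow> b 0 = 1 \<and> (\<forall>n. b n > 0) \<and> (\<forall>n. b n dvd b (Suc n) \<and> b n \<noteq> b (Suc n))"

text \<open>Membership of x + Z in T_m = [-1/(4m), 1/(4m)] + Z.\<close>
definition in_T :: "nat \<Rightarrow> real \<Rightarrow> bool" where
  "in_T m x \<longleftrightarrow> (\<exists>z::int. \<bar>x - real_of_int z\<bar> \<le> 1 / (4 * real m))"

definition V_b :: "(nat \<Rightarrow> nat) \<Rightarrow> nat \<Rightarrow> int set" where
  "V_b b m = {k::int. \<forall>n\<ge>1. in_T m (real_of_int k / real (b n))}"

definition tau_b :: "(nat \<Rightarrow> nat) \<Rightarrow> int topology" where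
  "tau_b b = topology (\<lambda>U. \<forall>x\<in>U. \<exists>m\<ge>1. (\<lambda>k. x + k) ` V_b b m \<subseteq> U)"

end

theory Submission
  imports Defs
begin

lemma in_T_mono: "1 \<le> m \<Longrightarrow> m \<le> m' \<Longrightarrow> in_T m' x \<Longrightarrow> in_T m x"
proof -
  assume a: "1 \<le> m" "m \<le> m'" "in_T m' x"
  then obtain z :: int where z: "\<bar>x - z\<bar> \<le> 1 / (4 * real m')" by (auto simp: in_T_def)
  have "1 / (4 * real m') \<le> 1 / (4 * real m)" using a by (simp add: frac_le)
  with z show ?thesis unfolding in_T_def by (blast intro: order_trans)
qed

lemma V_mono: "1 \<le> m \<Longrightarrow> m \<le> m' \<Longrightarrow> V_b b m' \<subseteq> V_b b m"
  unfolding V_b_def using in_T_mono by blast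

lemma in_T_add: "in_T (2*m) x \<Longrightarrow> in_T (2*m) y \<Longrightarrow> in_T m (x+y)"
proof -
  assume "in_T (2*m) x" "in_T (2*m) y"
  then obtain z1 z2 :: int where z: "\<bar>x - z1\<bar> \<le> 1 / (8 * real m)" "\<bar>y - z2\<bar> \<le> 1 / (8 * real m)"
    by (auto simp: in_T_def)
  have "\<bar>(x+y) - real_of_int (z1+z2)\<bar> \<le> \<bar>x - z1\<bar> + \<bar>y - z2\<bar>" by simp
  also have "\<dots> \<le> 1 / (4 * real m)" using z by simp
  finally show ?thesis unfolding in_T_def by blast
qed

lemma V_add: "a \<in> V_b b (2*m) \<Longrightarrow> c \<in> V_b b (2*m) \<Longrightarrow> a + c \<in> V_b b m"
  unfolding V_b_def by (auto simp: add_divide_distrib intro: in_T_add)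

lemma V_zero: "0 \<in> V_b b m"
  unfolding V_b_def in_T_def by (auto intro!: exI[of _ 0])

lemma isto: "istopology (\<lambda>U. \<forall>x\<in>U. \<exists>m\<ge>1. (\<lambda>k. x + k) ` V_b b m \<subseteq> U)"
  unfolding istopology_def
proof (intro conjI allI impI)
  fix S T :: "int set"
  assume S: "\<forall>x\<in>S. \<exists>m\<ge>1. (+) x ` V_b b m \<subseteq> S" and T: "\<forall>x\<in>T. \<exists>m\<ge>1. (+) x ` V_b b m \<subseteq> T"
  show "\<forall>x\<in>S \<inter> T. \<exists>m\<ge>1. (+) x ` V_b b m \<subseteq> S \<inter> T"
  proof
    fix x assume "x \<in> S \<inter> T"
    then obtain m1 m2 where m: "m1 \<ge> 1" "(+) x ` V_b b m1 \<subseteq> S" "m2 \<ge> 1" "(+) x ` V_b b m2 \<subseteq> T"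
      using S T by blast
    have h1: "V_b b (max m1 m2) \<subseteq> V_b b m1" by (rule V_mono) (use m in auto)
    have h2: "V_b b (max m1 m2) \<subseteq> V_b b m2" by (rule V_mono) (use m in auto)
    have "(+) x ` V_b b (max m1 m2) \<subseteq> S \<inter> T" using m h1 h2 by blast
    moreover have "1 \<le> max m1 m2" using m by simp
    ultimately show "\<exists>m\<ge>1. (+) x ` V_b b m \<subseteq> S \<inter> T" by blast
  qed
next
  fix K :: "int set set"
  assume "\<forall>S\<in>K. \<forall>x\<in>S. \<exists>m\<ge>1. (+) x ` V_b b m \<subseteq> S"
  then have H: "\<And>S x. S \<in> K \<Longrightarrow> x \<in> S \<Longrightarrow> \<exists>m\<ge>1. (+) x ` V_b b m \<subseteq> S" by blast
  show "\<forall>x\<in>\<Union>K. \<exists>m\<ge>1. (+) x ` V_b b m \<subseteq> \<Union>K"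
  proof
    fix x assume "x \<in> \<Union>K"
    then obtain S where S: "S \<in> K" "x \<in> S" by blast
    then obtain m where "m \<ge> 1" "(+) x ` V_b b m \<subseteq> S" using H by blast
    moreover have "S \<subseteq> \<Union>K" using S by blast
    ultimately show "\<exists>m\<ge>1. (+) x ` V_b b m \<subseteq> \<Union>K" by blast
  qed
qed

lemma openin_tau: "openin (tau_b b) U \<longleftrightarrow> (\<forall>x\<in>U. \<exists>m\<ge>1. (\<lambda>k. x + k) ` V_b b m \<subseteq> U)"
  unfolding tau_b_def topology_inverse'[OF isto] by (rule refl)

lemma limitin_tau:
  "limitin (tau_b b) f 0 F \<longleftrightarrow> (\<forall>m\<ge>1. eventually (\<lambda>j. f j \<in> V_b b m) F)"
proof
  assume L: "limitin (tau_b b) f 0 F"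
  show "\<forall>m\<ge>1. eventually (\<lambda>j. f j \<in> V_b b m) F"
  proof (intro allI impI)
    fix m :: nat assume m: "m \<ge> 1"
    define U where "U = {x. \<exists>m'\<ge>1. (+) x ` V_b b m' \<subseteq> V_b b m}"
    have "openin (tau_b b) U" unfolding openin_tau
    proof
      fix x assume "x \<in> U"
      then obtain m' where m': "m' \<ge> 1" "(+) x ` V_b b m' \<subseteq> V_b b m" unfolding U_def by blast
      have subU: "(+) x ` V_b b (2*m') \<subseteq> U"
      proof
        fix y assume "y \<in> (+) x ` V_b b (2*m')"
        then obtain v where v: "v \<in> V_b b (2*m')" "y = x + v" by auto
        have sub: "(+) y ` V_b b (2*m') \<subseteq> V_b b m"
        proof
          fix w assume "w \<in> (+) y ` V_b b (2*m')"
          then obtain u where u: "u \<in> V_b b (2*m')" "w = y + u" by auto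
          have "v + u \<in> V_b b m'" using V_add[OF v(1) u(1)] .
          then have "x + (v + u) \<in> V_b b m" using m'(2) by blast
          then show "w \<in> V_b b m" using u v by (simp add: add.assoc)
        qed
        have "1 \<le> 2*m'" using m' by simp
        then show "y \<in> U" unfolding U_def using sub by blast
      qed
      have "1 \<le> 2*m'" using m' by simp
      then show "\<exists>m\<ge>1. (+) x ` V_b b m \<subseteq> U" using subU by blast
    qed
    moreover have "0 \<in> U"
    proof -
      have "(+) 0 ` V_b b m \<subseteq> V_b b m" by simp
      then show ?thesis unfolding U_def using m by blast
    qed
    ultimately have ev: "eventually (\<lambda>j. f j \<in> U) F" using L unfolding limitin_def by blast
    have "U \<subseteq> V_b b m"
    proof
      fix x assume "x \<in> U"
      then obtain m' where "(+) x ` V_b b m' \<subseteq> V_b b m" unfolding U_def by blast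
      moreover have "x + 0 \<in> (+) x ` V_b b m'" using V_zero[of b m'] by (rule imageI)
      ultimately have "x + 0 \<in> V_b b m" by (rule subsetD)
      then show "x \<in> V_b b m" by simp
    qed
    then show "eventually (\<lambda>j. f j \<in> V_b b m) F" using ev by (auto elim: eventually_mono)
  qed
next
  assume R: "\<forall>m\<ge>1. eventually (\<lambda>j. f j \<in> V_b b m) F"
  have top: "0 \<in> topspace (tau_b b)"
  proof -
    have "openin (tau_b b) UNIV" unfolding openin_tau
    proof
      fix x :: int
      have "(+) x ` V_b b 1 \<subseteq> UNIV" by simp
      then show "\<exists>m\<ge>1. (+) x ` V_b b m \<subseteq> UNIV" by blast
    qed
    then show ?thesis by (metis UNIV_I openin_subset subsetD)
  qed
  show "limitin (tau_b b) f 0 F" unfolding limitin_def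
  proof (intro conjI top allI impI)
    fix U assume "openin (tau_b b) U \<and> 0 \<in> U"
    then obtain m where "m \<ge> 1" "(+) 0 ` V_b b m \<subseteq> U" unfolding openin_tau by blast
    then have "V_b b m \<subseteq> U" by simp
    moreover have "eventually (\<lambda>j. f j \<in> V_b b m) F" using R \<open>m \<ge> 1\<close> by blast
    ultimately show "eventually (\<lambda>j. f j \<in> U) F" by (auto elim: eventually_mono)
  qed
qed

lemma distZ: "0 < (x::real) \<Longrightarrow> x \<le> 1/2 \<Longrightarrow> x \<le> \<bar>x - of_int z\<bar>"
proof (cases "z \<le> 0")
  case True
  assume "0 < x" "x \<le> 1/2"
  have "real_of_int z \<le> 0" using True by simp
  then show ?thesis using \<open>0 < x\<close> by linarith
next
  case False
  assume "0 < x" "x \<le> 1/2"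
  have "real_of_int z \<ge> 1" using False by simp
  then show ?thesis using \<open>x \<le> 1/2\<close> by linarith
qed

lemma dvd_chain: assumes "D_sequence b" shows "j \<le> n \<Longrightarrow> b j dvd b n"
proof (induction n)
  case 0 then show ?case by simp
next
  case (Suc k)
  show ?case
  proof (cases "j = Suc k")
    case False
    then have "b j dvd b k" using Suc by simp
    then show ?thesis using assms by (meson D_sequence_def dvd_trans)
  qed simp
qed

lemma key:
  assumes D: "D_sequence b" and m: "m \<ge> 1"
  shows "int (b j) \<in> V_b b m \<longleftrightarrow> 4 * real m \<le> real (b (Suc j)) / real (b j)"
proof -
  have pos: "\<And>n. b n > 0" using D unfolding D_sequence_def by blast
  have two: "2 * b j \<le> b (Suc j)"
  proof -
    obtain k where k: "b (Suc j) = b j * k" using D unfolding D_sequence_def by blast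
    have "k \<noteq> 1" using D k unfolding D_sequence_def by (metis mult.right_neutral)
    moreover have "k \<noteq> 0" using k pos[of "Suc j"] by auto
    ultimately have "k \<ge> 2" by linarith
    then show ?thesis using k by (simp add: mult.commute)
  qed
  define x where "x = real (b j) / real (b (Suc j))"
  have x0: "0 < x" using pos unfolding x_def by simp
  have x2: "x \<le> 1/2"
  proof -
    have "real (2 * b j) \<le> real (b (Suc j))" using two by linarith
    then show ?thesis unfolding x_def using pos[of "Suc j"] by (simp add: field_simps)
  qed
  have ratio: "real (b (Suc j)) / real (b j) = 1 / x" unfolding x_def by simp
  have iff: "4 * real m \<le> 1 / x \<longleftrightarrow> x \<le> 1 / (4 * real m)"
    using x0 m by (simp add: field_simps)
  show ?thesis
  proof
    assume "int (b j) \<in> V_b b m"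
    then have "in_T m (real_of_int (int (b j)) / real (b (Suc j)))" unfolding V_b_def by auto
    then obtain z :: int where "\<bar>x - z\<bar> \<le> 1 / (4 * real m)" unfolding in_T_def x_def by auto
    then have "x \<le> 1 / (4 * real m)" using distZ[OF x0 x2, of z] by linarith
    then show "4 * real m \<le> real (b (Suc j)) / real (b j)" using ratio iff by simp
  next
    assume "4 * real m \<le> real (b (Suc j)) / real (b j)"
    then have xm: "x \<le> 1 / (4 * real m)" using ratio iff by simp
    show "int (b j) \<in> V_b b m" unfolding V_b_def
    proof (intro CollectI allI impI)
      fix n :: nat assume "n \<ge> 1"
      show "in_T m (real_of_int (int (b j)) / real (b n))"
      proof (cases "n \<le> j")
        case True
        then obtain k where k: "b j = b n * k" using dvd_chain[OF D True] by blast
        have "real_of_int (int (b j)) / real (b n) = real_of_int (int k)"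
          using k pos[of n] by simp
        then show ?thesis unfolding in_T_def by (intro exI[of _ "int k"]) simp
      next
        case False
        then have "b (Suc j) dvd b n" using dvd_chain[OF D] by simp
        then have le: "b (Suc j) \<le> b n" using pos[of n] by (simp add: dvd_imp_le)
        have "real (b j) / real (b n) \<le> x" unfolding x_def
          using le pos by (simp add: frac_le)
        moreover have "0 \<le> real (b j) / real (b n)" by simp
        ultimately show ?thesis unfolding in_T_def using xm
          by (intro exI[of _ 0]) simp
      qed
    qed
  qed
qed

theorem corollary3p6:
  fixes b :: "nat \<Rightarrow> nat"
  assumes "D_sequence b"
  shows "filterlim (\<lambda>n. real (b (Suc n)) / real (b n)) at_top sequentially
         \<longleftrightarrow> limitin (tau_b b) (\<lambda>j. int (b j)) 0 sequentially"
proof -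
  have "limitin (tau_b b) (\<lambda>j. int (b j)) 0 sequentially \<longleftrightarrow>
        (\<forall>m\<ge>1. eventually (\<lambda>j. 4 * real m \<le> real (b (Suc j)) / real (b j)) sequentially)"
    unfolding limitin_tau using key[OF assms] by simp
  also have "\<dots> \<longleftrightarrow> filterlim (\<lambda>n. real (b (Suc n)) / real (b n)) at_top sequentially"
    unfolding filterlim_at_top
  proof safe
    fix Z :: real
    assume A: "\<forall>m\<ge>1. eventually (\<lambda>j. 4 * real m \<le> real (b (Suc j)) / real (b j)) sequentially"
    define m where "m = nat \<lceil>Z\<rceil> + 1"
    have "Z \<le> real (nat \<lceil>Z\<rceil>)" by (rule real_nat_ceiling_ge)
    then have "Z \<le> 4 * real m" unfolding m_def by simp
    moreover have "m \<ge> 1" unfolding m_def by simp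
    ultimately have Zm: "Z \<le> 4 * real m" and ev: "eventually (\<lambda>j. 4 * real m \<le> real (b (Suc j)) / real (b j)) sequentially"
      using A by blast+
    show "eventually (\<lambda>j. Z \<le> real (b (Suc j)) / real (b j)) sequentially"
      using ev by (rule eventually_mono) (use Zm in linarith)
  next
    fix m :: nat
    assume "\<forall>Z. eventually (\<lambda>j. Z \<le> real (b (Suc j)) / real (b j)) sequentially"
    then show "eventually (\<lambda>j. 4 * real m \<le> real (b (Suc j)) / real (b j)) sequentially" by blast
  qed
  finally show ?thesis by (rule sym)
qed

end
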